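(* Let $q>1$, let $\Pi_n\sim\mathrm{Mallows}(n,q)$, and let $\Pi,\Pi'\sim\mathrm{Mallows}(\mathbb{N},1/q)$ be independent. Let $r_n(i):=n+1-i$ and $m=\lfloor n/2-(\log n)^2\rfloor$. There exists a coupling of $\Pi_n$ with $(\Pi,\Pi')$ such that $$\mathbb{P}\bigl((r_n\circ\Pi_n)(i)=\Pi(i)\ \text{and}\ (\Pi_n\circ r_n)(i)=\Pi'(i)\ \text{for all }1\le i\le m\bigr)=1-o(1)\quad (n\to\infty).$$
   Context: For $q>0$, $\Pi_n\sim\mathrm{Mallows}(n,q)$ means $\mathbb{P}(\Pi_n=\pi)\propto q^{\mathrm{inv}(\pi)}$ over permutations $\pi$ of $[n]=\{1,\dots,n\}$, where $\mathrm{inv}(\pi)$ is the number of pairs $i<j$ with $\pi(i)>\pi(j)$. For $0<p<1$, $\Pi\sim\mathrm{Mallows}(\mathbb{N},p)$ is the random injection $\mathbb{N}\to\mathbb{N}$ constructed as follows: let $Z_1,Z_2,\dots$ be i.i.d. geometric with $\mathbb{P}(Z_i=k)=(1-p)p^{k-1}$, $k\ge1$; set $\Pi(1)=Z_1$ and, for $i>1$, let $\Pi(i)$ be the $Z_i$-th smallest element of $\mathbb{N}\setminus\{\Pi(1),\dots,\Pi(i-1)\}$. *)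

theory Defs
  imports "HOL-Probability.Probability" "HOL-Library.Infinite_Set"
begin

definition inversions :: "nat \<Rightarrow> (nat \<Rightarrow> nat) \<Rightarrow> nat" where
  "inversions n \<sigma> = card {(i, j). 1 \<le> i \<and> i < j \<and> j \<le> n \<and> \<sigma> i > \<sigma> j}"

definition mallows_fin :: "nat \<Rightarrow> real \<Rightarrow> (nat \<Rightarrow> nat) pmf" where
  "mallows_fin n q = embed_pmf (\<lambda>\<sigma>. if \<sigma> permutes {1..n}
      then q ^ inversions n \<sigma> / (\<Sum>\<tau>\<in>{\<tau>. \<tau> permutes {1..n}}. q ^ inversions n \<tau>)
      else 0)"

text \<open>Geometric law on {1,2,...}: P(Z = k) = (1-p) p^(k-1).\<close>
definition geom1 :: "real \<Rightarrow> nat pmf" where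
  "geom1 p = map_pmf Suc (geometric_pmf (1 - p))"

text \<open>Prefix (Pi(1),...,Pi(i)) of the random injection built from Z(1),Z(2),...:
  Pi(i) is the Z(i)-th smallest element of {1,2,...} minus {Pi(1),...,Pi(i-1)}.\<close>
fun mprefix :: "(nat \<Rightarrow> nat) \<Rightarrow> nat \<Rightarrow> nat list" where
  "mprefix Z 0 = []"
| "mprefix Z (Suc i) =
     (let P = mprefix Z i in P @ [enumerate ({1..} - set P) (Z (Suc i) - 1)])"

text \<open>The injection N -> N (domain {1,2,...}; value 0 at 0 by convention).\<close>
definition mallows_inj :: "(nat \<Rightarrow> nat) \<Rightarrow> nat \<Rightarrow> nat" where
  "mallows_inj Z i = (if i = 0 then 0 else last (mprefix Z i))"

definition FunM :: "(nat \<Rightarrow> nat) measure" where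
  "FunM = Pi\<^sub>M UNIV (\<lambda>_. count_space UNIV)"

definition mallows_N :: "real \<Rightarrow> (nat \<Rightarrow> nat) measure" where
  "mallows_N p = distr (Pi\<^sub>M UNIV (\<lambda>_. measure_pmf (geom1 p))) FunM mallows_inj"

definition is_coupling ::
  "nat \<Rightarrow> real \<Rightarrow> ((nat \<Rightarrow> nat) \<times> (nat \<Rightarrow> nat) \<times> (nat \<Rightarrow> nat)) measure \<Rightarrow> bool" where
  "is_coupling n q C \<longleftrightarrow>
     prob_space C \<and> sets C = sets (FunM \<Otimes>\<^sub>M FunM \<Otimes>\<^sub>M FunM) \<and>
     distr C FunM fst = distr (measure_pmf (mallows_fin n q)) FunM (\<lambda>x. x) \<and>
     distr C (FunM \<Otimes>\<^sub>M FunM) snd = mallows_N (1 / q) \<Otimes>\<^sub>M mallows_N (1 / q)"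

definition good_event :: "nat \<Rightarrow> ((nat \<Rightarrow> nat) \<times> (nat \<Rightarrow> nat) \<times> (nat \<Rightarrow> nat)) set" where
  "good_event n = {(\<sigma>, \<pi>, \<pi>'). \<forall>i::nat. 1 \<le> i \<and> int i \<le> \<lfloor>real n / 2 - (ln (real n))^2\<rfloor> \<longrightarrow>
       (n + 1 - \<sigma> i = \<pi> i \<and> \<sigma> (n + 1 - i) = \<pi>' i)}"

end

theory Submission
  imports Defs
begin


lemma rank_inj_less:
  fixes x y :: nat
  assumes "x \<in> R" "y \<in> R" "card {z\<in>R. z < x} = card {z\<in>R. z < y}"
  shows "x = y"
proof (rule ccontr)
  assume ne: "x \<noteq> y"
  { fix a b :: nat assume ab: "a \<in> R" "b \<in> R" "a < b"
    have "{z\<in>R. z < a} \<subset> {z\<in>R. z < b}" using ab by auto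
    then have "card {z\<in>R. z < a} < card {z\<in>R. z < b}"
      by (intro psubset_card_mono) auto }
  note * = this
  show False using ne *[of x y] *[of y x] assms by (cases "x < y") auto
qed

lemma rank_inj_greater:
  fixes x y :: nat
  assumes "finite R" "x \<in> R" "y \<in> R" "card {z\<in>R. x < z} = card {z\<in>R. y < z}"
  shows "x = y"
proof (rule ccontr)
  assume ne: "x \<noteq> y"
  { fix a b :: nat assume ab: "a \<in> R" "b \<in> R" "a < b"
    have "{z\<in>R. b < z} \<subset> {z\<in>R. a < z}" using ab by auto
    then have "card {z\<in>R. b < z} < card {z\<in>R. a < z}"
      by (intro psubset_card_mono) (auto intro: finite_subset[OF _ assms(1)]) }
  note * = this
  show False using ne *[of x y] *[of y x] assms by (cases "x < y") auto
qed



definition lc :: "nat \<Rightarrow> (nat\<Rightarrow>nat) \<Rightarrow> nat \<Rightarrow> nat" where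
  "lc n \<sigma> k = card {j. k<j \<and> j\<le>n \<and> \<sigma> k < \<sigma> j}"
definition rc :: "nat \<Rightarrow> (nat\<Rightarrow>nat) \<Rightarrow> nat \<Rightarrow> nat" where
  "rc m \<sigma> k = card {j. m<j \<and> j<k \<and> \<sigma> j < \<sigma> k}"
definition code :: "nat \<Rightarrow> nat \<Rightarrow> (nat\<Rightarrow>nat) \<Rightarrow> nat \<Rightarrow> nat" where
  "code n m \<sigma> k = (if k \<le> m then lc n \<sigma> k else rc m \<sigma> k)"
definition Nk :: "nat \<Rightarrow> nat \<Rightarrow> nat \<Rightarrow> nat" where
  "Nk n m k = (if k \<le> m then n+1-k else k-m)"
definition CS :: "nat \<Rightarrow> nat \<Rightarrow> (nat \<Rightarrow> nat) set" where
  "CS n m = PiE {1..n} (\<lambda>k. {..<Nk n m k})"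
definition codeR :: "nat \<Rightarrow> nat \<Rightarrow> (nat\<Rightarrow>nat) \<Rightarrow> nat \<Rightarrow> nat" where
  "codeR n m \<sigma> = restrict (code n m \<sigma>) {1..n}"

lemma perm_img_compl:
  assumes "\<sigma> permutes S" "A \<subseteq> S"
  shows "\<sigma> ` (S - A) = S - \<sigma> ` A"
proof -
  have inj: "inj \<sigma>" using assms(1) permutes_inj by blast
  have "\<sigma> ` (S - A) = \<sigma> ` S - \<sigma> ` A" using inj by (simp add: image_set_diff)
  then show ?thesis using permutes_image[OF assms(1)] by simp
qed

lemma lc_image:
  assumes "\<sigma> permutes {1..n}"
  shows "lc n \<sigma> k = card {v\<in>\<sigma>`{k..n}. \<sigma> k < v}"
proof -
  have inj: "inj \<sigma>" using assms permutes_inj by blast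
  have "{v\<in>\<sigma>`{k..n}. \<sigma> k < v} = \<sigma> ` {j. k<j \<and> j\<le>n \<and> \<sigma> k < \<sigma> j}"
  proof (intro equalityI subsetI)
    fix v assume "v \<in> {v\<in>\<sigma>`{k..n}. \<sigma> k < v}"
    then obtain j where j: "j\<in>{k..n}" "v = \<sigma> j" "\<sigma> k < v" by auto
    then have "k \<noteq> j" by auto
    then show "v \<in> \<sigma> ` {j. k<j \<and> j\<le>n \<and> \<sigma> k < \<sigma> j}" using j by auto
  qed auto
  then show ?thesis unfolding lc_def
    by (simp add: card_image[OF inj_on_subset[OF inj subset_UNIV]])
qed

lemma rc_image:
  assumes "\<sigma> permutes {1..n}"
  shows "rc m \<sigma> k = card {v\<in>\<sigma>`{m<..k}. v < \<sigma> k}"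
proof -
  have inj: "inj \<sigma>" using assms permutes_inj by blast
  have "{v\<in>\<sigma>`{m<..k}. v < \<sigma> k} = \<sigma> ` {j. m<j \<and> j<k \<and> \<sigma> j < \<sigma> k}"
  proof (intro equalityI subsetI)
    fix v assume "v \<in> {v\<in>\<sigma>`{m<..k}. v < \<sigma> k}"
    then obtain j where j: "j\<in>{m<..k}" "v = \<sigma> j" "v < \<sigma> k" by auto
    then have "k \<noteq> j" by auto
    then show "v \<in> \<sigma> ` {j. m<j \<and> j<k \<and> \<sigma> j < \<sigma> k}" using j by auto
  qed auto
  then show ?thesis unfolding rc_def
    by (simp add: card_image[OF inj_on_subset[OF inj subset_UNIV]])
qed

lemma codeR_in_CS:
  assumes "\<sigma> permutes {1..n}"
  shows "codeR n m \<sigma> \<in> CS n m"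
proof -
  { fix k assume k: "k \<in> {1..n}"
    have "code n m \<sigma> k < Nk n m k"
    proof (cases "k \<le> m")
      case True
      have "lc n \<sigma> k \<le> card {k<..n}" unfolding lc_def by (intro card_mono) auto
      moreover have "n - k < n + 1 - k" using k by auto
      ultimately show ?thesis using True k by (simp add: code_def Nk_def)
    next
      case False
      have "rc m \<sigma> k \<le> card {m<..<k}" unfolding rc_def by (intro card_mono) auto
      then show ?thesis using False k by (simp add: code_def Nk_def)
    qed }
  then show ?thesis unfolding CS_def codeR_def by auto
qed

lemma code_inj:
  assumes s: "\<sigma> permutes {1..n}" and t: "\<tau> permutes {1..n}"
    and eq: "\<And>k. k \<in> {1..n} \<Longrightarrow> code n m \<sigma> k = code n m \<tau> k"
  shows "\<sigma> = \<tau>"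
proof -
  have left: "\<And>k. 1 \<le> k \<Longrightarrow> k \<le> m \<Longrightarrow> k \<le> n \<Longrightarrow> \<sigma> k = \<tau> k"
  proof -
    fix k show "1 \<le> k \<Longrightarrow> k \<le> m \<Longrightarrow> k \<le> n \<Longrightarrow> \<sigma> k = \<tau> k"
    proof (induction k rule: less_induct)
      case (less k)
      have agree: "\<sigma> ` {1..<k} = \<tau> ` {1..<k}"
        using less by (intro image_cong) auto
      have kn: "{k..n} = {1..n} - {1..<k}" using less by auto
      have A: "\<sigma> ` ({1..n} - {1..<k}) = {1..n} - \<sigma>`{1..<k}" by (rule perm_img_compl[OF s]) (use less in auto)
      have B: "\<tau> ` ({1..n} - {1..<k}) = {1..n} - \<tau>`{1..<k}" by (rule perm_img_compl[OF t]) (use less in auto)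
      have R: "\<sigma> ` {k..n} = \<tau> ` {k..n}"
        by (simp only: kn A B agree)
      have c: "lc n \<sigma> k = lc n \<tau> k" using eq[of k] less by (simp add: code_def)
      have h1: "\<sigma> k \<in> \<sigma> ` {k..n}" using less by auto
      have h2: "\<tau> k \<in> \<sigma> ` {k..n}" unfolding R using less by auto
      have h3: "card {v\<in>\<sigma>`{k..n}. \<sigma> k < v} = card {v\<in>\<sigma>`{k..n}. \<tau> k < v}"
        using c lc_image[OF s, of k] lc_image[OF t, of k] R by simp
      show ?case by (rule rank_inj_greater[OF finite_imageI[OF finite_atLeastAtMost] h1 h2 h3])
    qed
  qed
  have right: "\<And>i. i < n - m \<Longrightarrow> \<sigma> (n - i) = \<tau> (n - i)"
  proof -
    fix i show "i < n - m \<Longrightarrow> \<sigma> (n - i) = \<tau> (n - i)"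
    proof (induction i rule: less_induct)
      case (less i)
      define k where "k = n - i"
      have km: "m < k" "k \<le> n" using less by (auto simp: k_def)
      have agree1: "\<sigma> ` {k<..n} = \<tau> ` {k<..n}"
      proof (intro image_cong refl)
        fix x assume x: "x \<in> {k<..n}"
        then have "x = n - (n - x)" "n - x < i" by (auto simp: k_def)
        then show "\<sigma> x = \<tau> x" using less.IH[of "n - x"] less.prems by simp
      qed
      have agree2: "\<sigma> ` {1..m} = \<tau> ` {1..m}"
        using left km by (intro image_cong) auto
      have kn: "{m<..k} = {1..n} - ({1..m} \<union> {k<..n})" using km by auto
      have A: "\<sigma> ` ({1..n} - ({1..m} \<union> {k<..n})) = {1..n} - \<sigma>`({1..m} \<union> {k<..n})"
        by (rule perm_img_compl[OF s]) (use km in auto)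
      have B: "\<tau> ` ({1..n} - ({1..m} \<union> {k<..n})) = {1..n} - \<tau>`({1..m} \<union> {k<..n})"
        by (rule perm_img_compl[OF t]) (use km in auto)
      have R: "\<sigma> ` {m<..k} = \<tau> ` {m<..k}"
        by (simp only: kn A B image_Un agree1 agree2)
      have c: "rc m \<sigma> k = rc m \<tau> k" using eq[of k] km by (simp add: code_def)
      have h1: "\<sigma> k \<in> \<sigma> ` {m<..k}" using km by auto
      have h2: "\<tau> k \<in> \<sigma> ` {m<..k}" unfolding R using km by auto
      have h3: "card {v\<in>\<sigma>`{m<..k}. v < \<sigma> k} = card {v\<in>\<sigma>`{m<..k}. v < \<tau> k}"
        using c rc_image[OF s, of m k] rc_image[OF t, of m k] R by simp
      have "\<sigma> k = \<tau> k" by (rule rank_inj_less[OF h1 h2 h3])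
      then show ?case by (simp add: k_def)
    qed
  qed
  show ?thesis
  proof
    fix x
    show "\<sigma> x = \<tau> x"
    proof (cases "x \<in> {1..n}")
      case True
      show ?thesis
      proof (cases "x \<le> m")
        case True then show ?thesis using left \<open>x \<in> {1..n}\<close> by auto
      next
        case False
        then have "x = n - (n - x)" "n - x < n - m" using \<open>x \<in> {1..n}\<close> by auto
        then show ?thesis using right by metis
      qed
    next
      case False then show ?thesis using s t by (simp add: permutes_not_in)
    qed
  qed
qed



lemma prod_left_fact:
  assumes "m \<le> n"
  shows "(\<Prod>k\<in>{1..m}. n+1-k) * fact (n-m) = (fact n :: nat)"
  using assms
proof (induction m)
  case 0 then show ?case by simp
next
  case (Suc m)
  have e: "n - m = Suc (n - Suc m)" using Suc.prems by simp
  have "fact (n - m) = (n - m) * fact (n - Suc m)"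
    by (simp add: e)
  moreover have "(\<Prod>k\<in>{1..Suc m}. n+1-k) = (\<Prod>k\<in>{1..m}. n+1-k) * (n - m)"
    using Suc.prems by (simp add: prod.cl_ivl_Suc)
  ultimately show ?case using Suc by (simp add: mult.assoc)
qed

lemma prod_right_fact: "(\<Prod>k\<in>{m<..m+d}. k-m) = (fact d :: nat)"
proof (induction d)
  case 0 then show ?case by simp
next
  case (Suc d)
  have "{m<..m+Suc d} = insert (m + Suc d) {m<..m+d}" by auto
  then show ?case using Suc by (simp add: mult.commute)
qed

lemma card_CS:
  assumes "m \<le> n"
  shows "card (CS n m) = fact n"
proof -
  have "card (CS n m) = (\<Prod>k\<in>{1..n}. Nk n m k)"
    unfolding CS_def by (simp add: card_PiE)
  also have "{1..n} = {1..m} \<union> {m<..m+(n-m)}" using assms by auto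
  also have "(\<Prod>k\<in>{1..m} \<union> {m<..m+(n-m)}. Nk n m k) =
      (\<Prod>k\<in>{1..m}. Nk n m k) * (\<Prod>k\<in>{m<..m+(n-m)}. Nk n m k)"
    by (intro prod.union_disjoint) auto
  also have "(\<Prod>k\<in>{1..m}. Nk n m k) = (\<Prod>k\<in>{1..m}. n+1-k)"
    by (intro prod.cong) (auto simp: Nk_def)
  also have "(\<Prod>k\<in>{m<..m+(n-m)}. Nk n m k) = (\<Prod>k\<in>{m<..m+(n-m)}. k-m)"
    by (intro prod.cong) (auto simp: Nk_def)
  also have "\<dots> = fact (n-m)" by (rule prod_right_fact)
  finally show ?thesis using prod_left_fact[OF assms] by simp
qed

lemma codeR_bij:
  assumes "m \<le> n"
  shows "bij_betw (codeR n m) {\<sigma>. \<sigma> permutes {1..n}} (CS n m)"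
proof -
  have inj: "inj_on (codeR n m) {\<sigma>. \<sigma> permutes {1..n}}"
  proof (rule inj_onI)
    fix \<sigma> \<tau> assume "\<sigma> \<in> {\<sigma>. \<sigma> permutes {1..n}}" "\<tau> \<in> {\<sigma>. \<sigma> permutes {1..n}}"
      and e: "codeR n m \<sigma> = codeR n m \<tau>"
    moreover have "\<And>k. k \<in> {1..n} \<Longrightarrow> code n m \<sigma> k = code n m \<tau> k"
      using e unfolding codeR_def by (metis restrict_apply')
    ultimately show "\<sigma> = \<tau>" using code_inj by blast
  qed
  have sub: "codeR n m ` {\<sigma>. \<sigma> permutes {1..n}} \<subseteq> CS n m"
    using codeR_in_CS by blast
  have "card (codeR n m ` {\<sigma>. \<sigma> permutes {1..n}}) = fact n"
    using card_image[OF inj] card_permutations[of "{1..n}" n] by simp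
  moreover have "finite (CS n m)" unfolding CS_def by (intro finite_PiE) auto
  ultimately have "codeR n m ` {\<sigma>. \<sigma> permutes {1..n}} = CS n m"
    using card_CS[OF assms] sub by (metis card_subset_eq)
  then show ?thesis using inj by (simp add: bij_betw_def)
qed

definition dec :: "nat \<Rightarrow> nat \<Rightarrow> (nat \<Rightarrow> nat) \<Rightarrow> nat \<Rightarrow> nat" where
  "dec n m c = (THE \<sigma>. \<sigma> permutes {1..n} \<and> codeR n m \<sigma> = c)"

lemma dec_props:
  assumes "m \<le> n" "c \<in> CS n m"
  shows "dec n m c permutes {1..n}" "codeR n m (dec n m c) = c"
proof -
  have b: "bij_betw (codeR n m) {\<sigma>. \<sigma> permutes {1..n}} (CS n m)" by (rule codeR_bij[OF assms(1)])
  have ex: "\<exists>!\<sigma>. \<sigma> permutes {1..n} \<and> codeR n m \<sigma> = c"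
  proof -
    obtain \<sigma> where "\<sigma> permutes {1..n}" "codeR n m \<sigma> = c"
      using b assms(2) unfolding bij_betw_def by (metis (mono_tags, lifting) imageE mem_Collect_eq)
    moreover have "\<And>\<tau>. \<tau> permutes {1..n} \<Longrightarrow> codeR n m \<tau> = c \<Longrightarrow> \<tau> = \<sigma>"
      using b calculation unfolding bij_betw_def inj_on_def by auto
    ultimately show ?thesis by blast
  qed
  show "dec n m c permutes {1..n}" "codeR n m (dec n m c) = c"
    using theI'[OF ex] unfolding dec_def by auto
qed

lemma inv_code:
  assumes s: "\<sigma> permutes {1..n}"
  shows "(\<Sum>k\<in>{1..n}. code n m \<sigma> k) + inversions n \<sigma> = card {(i,j). 1\<le>i \<and> i<j \<and> (j::nat)\<le>n}"
proof -
  have inj: "inj \<sigma>" using s permutes_inj by blast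
  define P where "P = {(i,j). 1\<le>i \<and> i<j \<and> (j::nat)\<le>n}"
  define I where "I = {(i,j). 1\<le>i \<and> i<j \<and> j\<le>n \<and> \<sigma> i > \<sigma> j}"
  define NI where "NI = {(i,j). 1\<le>i \<and> i<j \<and> j\<le>n \<and> \<sigma> i < \<sigma> j}"
  have finP: "finite P" unfolding P_def
    by (rule finite_subset[of _ "{1..n} \<times> {1..n}"]) auto
  have PIN: "P = I \<union> NI" unfolding P_def I_def NI_def
  proof (intro equalityI subsetI)
    fix x assume "x \<in> {(i,j). 1\<le>i \<and> i<j \<and> (j::nat)\<le>n}"
    then obtain i j where x: "x=(i,j)" "1\<le>i" "i<j" "j\<le>n" by auto
    have "\<sigma> i \<noteq> \<sigma> j" using inj x(3) by (simp add: inj_eq)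
    then show "x \<in> {(i,j). 1\<le>i \<and> i<j \<and> j\<le>n \<and> \<sigma> i > \<sigma> j} \<union> {(i,j). 1\<le>i \<and> i<j \<and> j\<le>n \<and> \<sigma> i < \<sigma> j}"
      using x by auto
  qed auto
  have disj: "I \<inter> NI = {}" unfolding I_def NI_def by auto
  have cP: "card P = card I + card NI"
    using PIN disj finP by (simp add: card_Un_disjoint)
  define F where "F k = (if k \<le> m then Pair k ` {j. k<j \<and> j\<le>n \<and> \<sigma> k < \<sigma> j}
                          else (\<lambda>i. (i,k)) ` {i. m<i \<and> i<k \<and> \<sigma> i < \<sigma> k})" for k
  have NIU: "NI = (\<Union>k\<in>{1..n}. F k)"
  proof (intro equalityI subsetI)
    fix x assume "x \<in> NI"
    then obtain i j where x: "x = (i,j)" "1\<le>i" "i<j" "j\<le>n" "\<sigma> i < \<sigma> j" unfolding NI_def by auto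
    show "x \<in> (\<Union>k\<in>{1..n}. F k)"
    proof (cases "i \<le> m")
      case True then have "x \<in> F i" using x by (auto simp: F_def)
      then show ?thesis using x by auto
    next
      case False then have "x \<in> F j" using x by (auto simp: F_def)
      then show ?thesis using x by auto
    qed
  next
    fix x assume "x \<in> (\<Union>k\<in>{1..n}. F k)"
    then obtain k where k: "k \<in> {1..n}" "x \<in> F k" by auto
    then show "x \<in> NI" unfolding NI_def F_def by (auto split: if_splits)
  qed
  have cF: "card (F k) = code n m \<sigma> k" for k
  proof (cases "k \<le> m")
    case True then show ?thesis unfolding F_def code_def lc_def by (simp add: card_image inj_on_def)
  next
    case False then show ?thesis unfolding F_def code_def rc_def by (simp add: card_image inj_on_def)
  qed
  have finF: "finite (F k)" if "k \<in> {1..n}" for k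
    using NIU finP PIN that by (metis UN_I finite_Un finite_subset subsetI)
  have dF: "\<forall>k\<in>{1..n}. \<forall>k'\<in>{1..n}. k \<noteq> k' \<longrightarrow> F k \<inter> F k' = {}"
  proof (intro ballI impI)
    fix k k' assume kk: "k \<in> {1..n}" "k' \<in> {1..n}" "k \<noteq> k'"
    have ch: "x \<in> F k \<Longrightarrow> (k \<le> m \<and> fst x = k) \<or> (\<not> k \<le> m \<and> snd x = k \<and> m < fst x)" for x k
      unfolding F_def by (cases "k \<le> m") auto
    show "F k \<inter> F k' = {}"
    proof (rule ccontr)
      assume "F k \<inter> F k' \<noteq> {}"
      then obtain x where "x \<in> F k" "x \<in> F k'" by auto
      from ch[OF this(1)] ch[OF this(2)] kk show False by auto
    qed
  qed
  have "card NI = (\<Sum>k\<in>{1..n}. card (F k))"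
    unfolding NIU by (rule card_UN_disjoint) (use finF dF in auto)
  then have "card NI = (\<Sum>k\<in>{1..n}. code n m \<sigma> k)" using cF by simp
  moreover have "inversions n \<sigma> = card I" unfolding inversions_def I_def by simp
  ultimately show ?thesis using cP unfolding P_def by simp
qed



lemma enum_rank:
  fixes S :: "nat set"
  assumes "infinite S"
  shows "card {y\<in>S. y < enumerate S i} = i"
proof -
  have "{y\<in>S. y < enumerate S i} = enumerate S ` {..<i}"
  proof (intro equalityI subsetI)
    fix y assume y: "y \<in> {y\<in>S. y < enumerate S i}"
    then obtain j where j: "y = enumerate S j" using enumerate_Ex[OF assms] by blast
    then have "j < i" using y assms by auto
    then show "y \<in> enumerate S ` {..<i}" using j by auto
  next
    fix y assume "y \<in> enumerate S ` {..<i}"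
    then show "y \<in> {y\<in>S. y < enumerate S i}"
      using assms enumerate_in_set by auto
  qed
  then show ?thesis
    using inj_enumerate[OF assms] by (simp add: card_image inj_on_subset)
qed

lemma enum_bound:
  fixes F :: "nat set"
  assumes "finite F"
  shows "enumerate ({1..} - F) i \<le> i + card F + 1"
proof -
  let ?S = "{1..} - F"
  have inf: "infinite ?S" using assms by (simp add: infinite_Ici Diff_infinite_finite)
  let ?e = "enumerate ?S i"
  have "{..<?e} \<subseteq> insert 0 (F \<union> {y\<in>?S. y < ?e})" by auto
  then have "card {..<?e} \<le> card (insert 0 (F \<union> {y\<in>?S. y < ?e}))"
    by (intro card_mono) (use assms in auto)
  also have "\<dots> \<le> 1 + card (F \<union> {y\<in>?S. y < ?e})" by (simp add: card_insert_le_m1 card_insert_if)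
  also have "\<dots> \<le> 1 + (card F + card {y\<in>?S. y < ?e})" by (simp add: card_Un_le)
  also have "card {y\<in>?S. y < ?e} = i" by (rule enum_rank[OF inf])
  finally show ?thesis by simp
qed

lemma enum_in:
  fixes F :: "nat set"
  assumes "finite F"
  shows "enumerate ({1..} - F) i \<in> {1..} - F"
  using assms by (intro enumerate_in_set) (simp add: infinite_Ici Diff_infinite_finite)

lemma enum_rank':
  fixes F :: "nat set"
  assumes "finite F"
  shows "card {y\<in>{1..} - F. y < enumerate ({1..} - F) i} = i"
  using assms by (intro enum_rank) (simp add: infinite_Ici Diff_infinite_finite)

lemma mprefix_nth:
  "length (mprefix Z k) = k \<and> (\<forall>j. 1 \<le> j \<and> j \<le> k \<longrightarrow> mprefix Z k ! (j-1) = mallows_inj Z j)"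
proof (induction k)
  case 0 then show ?case by simp
next
  case (Suc k)
  let ?P = "mprefix Z k"
  let ?e = "enumerate ({1..} - set ?P) (Z (Suc k) - 1)"
  have eq: "mprefix Z (Suc k) = ?P @ [?e]" by (simp add: Let_def)
  have "mallows_inj Z (Suc k) = ?e" unfolding mallows_inj_def by (simp add: Let_def)
  then show ?case using Suc unfolding eq
    by (auto simp: nth_append le_Suc_eq)
qed

lemma set_mprefix: "set (mprefix Z k) = mallows_inj Z ` {1..k}"
proof -
  have l: "length (mprefix Z k) = k" using mprefix_nth by blast
  have "set (mprefix Z k) = (\<lambda>j. mprefix Z k ! j) ` {..<k}" using l by (simp add: set_conv_nth) blast
  also have "\<dots> = (\<lambda>j. mprefix Z k ! (j-1)) ` (Suc ` {..<k})"
    by (simp add: image_image)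
  also have "\<dots> = (\<lambda>j. mprefix Z k ! (j-1)) ` {1..k}" by (simp add: image_Suc_lessThan)
  also have "\<dots> = mallows_inj Z ` {1..k}" using mprefix_nth by (intro image_cong) auto
  finally show ?thesis .
qed

lemma inj_step:
  assumes "1 \<le> k"
  shows "mallows_inj Z k = enumerate ({1..} - mallows_inj Z ` {1..<k}) (Z k - 1)"
proof -
  obtain k' where k: "k = Suc k'" using assms by (cases k) auto
  have "{1..<k} = {1..k'}" using k by auto
  then show ?thesis using set_mprefix[of Z k'] unfolding k mallows_inj_def by (simp add: Let_def)
qed



definition ycode :: "nat \<Rightarrow> nat \<Rightarrow> (nat \<Rightarrow> nat) \<Rightarrow> (nat \<Rightarrow> nat) \<Rightarrow> nat \<Rightarrow> nat" where
  "ycode n m Z Z' = (\<lambda>k\<in>{1..n}. if k \<le> m then (Z k - 1) mod (n+1-k) else (Z' (n+1-k) - 1) mod (k-m))"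

definition sig :: "nat \<Rightarrow> nat \<Rightarrow> (nat \<Rightarrow> nat) \<Rightarrow> (nat \<Rightarrow> nat) \<Rightarrow> nat \<Rightarrow> nat" where
  "sig n m Z Z' = dec n m (ycode n m Z Z')"

lemma ycode_CS:
  assumes "m \<le> n"
  shows "ycode n m Z Z' \<in> CS n m"
  unfolding CS_def ycode_def Nk_def by (auto intro!: mod_less_divisor)

lemma sig_perm: "m \<le> n \<Longrightarrow> sig n m Z Z' permutes {1..n}"
  unfolding sig_def by (rule dec_props(1)[OF _ ycode_CS])

lemma code_sig:
  assumes "m \<le> n" "k \<in> {1..n}"
  shows "code n m (sig n m Z Z') k = ycode n m Z Z' k"
proof -
  have "codeR n m (sig n m Z Z') = ycode n m Z Z'"
    unfolding sig_def by (rule dec_props(2)[OF assms(1) ycode_CS[OF assms(1)]])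
  then show ?thesis using assms(2) unfolding codeR_def by (metis restrict_apply')
qed

lemma good_left:
  assumes nm: "2*m + 2*D \<le> n"
    and ZD: "\<And>k. k \<in> {1..m} \<Longrightarrow> Z k - 1 \<le> D"
    and \<sigma>: "\<sigma> = sig n m Z Z'"
  shows "1 \<le> k \<Longrightarrow> k \<le> m \<Longrightarrow> mallows_inj Z k = n+1-\<sigma> k \<and> mallows_inj Z k \<le> k + D \<and> 1 \<le> mallows_inj Z k"
proof (induction k rule: less_induct)
  case (less k)
  have mn: "m \<le> n" using nm by simp
  have s: "\<sigma> permutes {1..n}" using sig_perm[OF mn] \<sigma> by simp
  have inj: "inj \<sigma>" using s permutes_inj by blast
  have kn: "k \<le> n" using less.prems nm by simp
  define F where "F = mallows_inj Z ` {1..<k}"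
  define S where "S = {1..} - F"
  define e where "e = mallows_inj Z k"
  have finF: "finite F" unfolding F_def by simp
  have cardF: "card F \<le> k - 1" unfolding F_def using card_image_le[of "{1..<k}" "mallows_inj Z"] by simp
  have Fs: "F = (\<lambda>j. n+1-\<sigma> j) ` {1..<k}" unfolding F_def
    using less.IH less.prems by (intro image_cong) auto
  have e_def': "e = enumerate S (Z k - 1)" unfolding e_def S_def F_def by (rule inj_step) (use less.prems in simp)
  have eS: "e \<in> S" unfolding e_def' S_def by (rule enum_in[OF finF])
  have eb: "e \<le> (Z k - 1) + card F + 1" unfolding e_def' S_def by (rule enum_bound[OF finF])
  have ZkD: "Z k - 1 \<le> D" using ZD less.prems by auto
  have ek: "e \<le> k + D" using eb cardF ZkD less.prems by linarith
  have e1: "1 \<le> e" using eS unfolding S_def by auto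
  have en: "e \<le> n" using ek less.prems nm by linarith
  have er: "card {y\<in>S. y < e} = Z k - 1" unfolding e_def' S_def by (rule enum_rank'[OF finF])
  define x where "x = n+1-e"
  have xn: "x \<in> {1..n}" using e1 en unfolding x_def by auto
  have lcv: "lc n \<sigma> k = Z k - 1"
  proof -
    have "code n m \<sigma> k = ycode n m Z Z' k" using code_sig[OF mn, of k] \<sigma> kn less.prems by simp
    moreover have "Z k - 1 < n + 1 - k" using ZkD less.prems nm by linarith
    ultimately show ?thesis using less.prems kn by (simp add: code_def ycode_def)
  qed
  define R where "R = \<sigma> ` {k..n}"
  have Rc: "R = {1..n} - \<sigma> ` {1..<k}"
  proof -
    have kk: "{k..n} = {1..n} - {1..<k}" using less.prems by auto
    have A: "\<sigma> ` ({1..n} - {1..<k}) = {1..n} - \<sigma>`{1..<k}" by (rule perm_img_compl[OF s]) (use kn in auto)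
    show ?thesis unfolding R_def by (simp only: kk A)
  qed
  have \<sigma>n: "\<sigma> j \<in> {1..n}" if "j \<in> {1..n}" for j using that by (simp only: permutes_in_image[OF s])
  have xR: "x \<in> R"
  proof -
    have "x \<notin> \<sigma> ` {1..<k}"
    proof
      assume "x \<in> \<sigma> ` {1..<k}"
      then obtain j where j: "j \<in> {1..<k}" "x = \<sigma> j" by auto
      then have "e = n+1-\<sigma> j" using x_def en by simp
      then have "e \<in> F" using Fs j by auto
      then show False using eS S_def by auto
    qed
    then show ?thesis using Rc xn by auto
  qed
  have img: "(\<lambda>v. n+1-v) ` {v\<in>R. x < v} = {y\<in>S. y < e}"
  proof (intro equalityI subsetI)
    fix y assume "y \<in> (\<lambda>v. n+1-v) ` {v\<in>R. x < v}"
    then obtain v where v: "v \<in> R" "x < v" "y = n+1-v" by auto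
    have vn: "v \<in> {1..n}" "v \<notin> \<sigma> ` {1..<k}" using v Rc by auto
    have "y \<notin> F"
    proof
      assume "y \<in> F"
      then obtain j where j: "j \<in> {1..<k}" "y = n+1-\<sigma> j" using Fs by auto
      have "\<sigma> j \<in> {1..n}" using \<sigma>n[of j] j kn by auto
      then have "\<sigma> j = v" using j v vn by auto
      then show False using vn j by auto
    qed
    then show "y \<in> {y\<in>S. y < e}" using v vn x_def en unfolding S_def by auto
  next
    fix y assume y: "y \<in> {y\<in>S. y < e}"
    define v where "v = n+1-y"
    have y1: "1 \<le> y" "y \<notin> F" using y S_def by auto
    have vn: "v \<in> {1..n}" using y1 y en unfolding v_def by auto
    have "v \<notin> \<sigma> ` {1..<k}"
    proof
      assume "v \<in> \<sigma> ` {1..<k}"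
      then obtain j where j: "j \<in> {1..<k}" "v = \<sigma> j" by auto
      then have "y = n+1-\<sigma> j" using v_def y en by auto
      then show False using y1 Fs j by auto
    qed
    then have "v \<in> R" using Rc vn by auto
    moreover have "x < v" using y en unfolding x_def v_def by auto
    moreover have "y = n+1-v" using y en unfolding v_def by auto
    ultimately show "y \<in> (\<lambda>v. n+1-v) ` {v\<in>R. x < v}" by auto
  qed
  have injr: "inj_on (\<lambda>v. n+1-v) {v\<in>R. x < v}"
    using Rc by (auto simp: inj_on_def)
  have cR: "card {v\<in>R. x < v} = Z k - 1"
    using card_image[OF injr] img er by simp
  have "\<sigma> k = x"
  proof (rule rank_inj_greater[of R])
    show "finite R" unfolding R_def by simp
    show "\<sigma> k \<in> R" unfolding R_def using kn by auto
    show "x \<in> R" by (rule xR)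
    show "card {z \<in> R. \<sigma> k < z} = card {z \<in> R. x < z}"
      using lc_image[OF s, of k] lcv cR unfolding R_def by simp
  qed
  then show ?case using x_def en ek e1 e_def by auto
qed


lemma good_right:
  assumes nm: "2*m + 2*D \<le> n"
    and ZD: "\<And>k. k \<in> {1..m} \<Longrightarrow> Z k - 1 \<le> D"
    and ZD': "\<And>k. k \<in> {1..m} \<Longrightarrow> Z' k - 1 \<le> D"
    and \<sigma>: "\<sigma> = sig n m Z Z'"
  shows "1 \<le> i \<Longrightarrow> i \<le> m \<Longrightarrow> mallows_inj Z' i = \<sigma> (n+1-i) \<and> mallows_inj Z' i \<le> i + D"
proof (induction i rule: less_induct)
  case (less i)
  have mn: "m \<le> n" using nm by simp
  have s: "\<sigma> permutes {1..n}" using sig_perm[OF mn] \<sigma> by simp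
  have \<sigma>n: "\<sigma> j \<in> {1..n}" if "j \<in> {1..n}" for j using that by (simp only: permutes_in_image[OF s])
  have i1: "1 \<le> i" "i \<le> m" using less.prems by auto
  define P where "P = n+1-i"
  have mP: "m < P" "P \<le> n" "1 \<le> P" using i1 nm unfolding P_def by auto
  have iP: "i = n+1-P" using i1 nm unfolding P_def by auto
  define F where "F = mallows_inj Z' ` {1..<i}"
  define S where "S = {1..} - F"
  define e where "e = mallows_inj Z' i"
  have finF: "finite F" unfolding F_def by simp
  have cardF: "card F \<le> i - 1" unfolding F_def using card_image_le[of "{1..<i}" "mallows_inj Z'"] by simp
  have F1: "F = (\<lambda>j. \<sigma> (n+1-j)) ` {1..<i}" unfolding F_def
    using less.IH i1 by (intro image_cong) auto
  have refl_img: "(\<lambda>j. n+1-j) ` {1..<i} = {P<..n}"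
  proof (intro equalityI subsetI)
    fix x assume "x \<in> (\<lambda>j. n+1-j) ` {1..<i}"
    then obtain j where "j \<in> {1..<i}" "x = n+1-j" by auto
    then show "x \<in> {P<..n}" using i1 nm unfolding P_def by auto
  next
    fix x assume x: "x \<in> {P<..n}"
    then have "n+1-x \<in> {1..<i}" "x = n+1-(n+1-x)" using i1 nm unfolding P_def by auto
    then show "x \<in> (\<lambda>j. n+1-j) ` {1..<i}" by blast
  qed
  have Fs: "F = \<sigma> ` {P<..n}"
    unfolding F1 refl_img[symmetric] image_image by simp
  have e_def': "e = enumerate S (Z' i - 1)" unfolding e_def S_def F_def by (rule inj_step) (use i1 in simp)
  have eS: "e \<in> S" unfolding e_def' S_def by (rule enum_in[OF finF])
  have eb: "e \<le> (Z' i - 1) + card F + 1" unfolding e_def' S_def by (rule enum_bound[OF finF])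
  have ZiD: "Z' i - 1 \<le> D" using ZD' i1 by auto
  have ei: "e \<le> i + D" using eb cardF ZiD i1 by linarith
  have e1: "1 \<le> e" using eS unfolding S_def by auto
  have emD: "e \<le> m + D" using ei i1 by linarith
  have en: "e \<le> n" using emD nm by linarith
  have er: "card {y\<in>S. y < e} = Z' i - 1" unfolding e_def' S_def by (rule enum_rank'[OF finF])
  have lv: "m + D < \<sigma> j" if j: "j \<in> {1..m}" for j
  proof -
    have "mallows_inj Z j = n+1-\<sigma> j \<and> mallows_inj Z j \<le> j + D \<and> 1 \<le> mallows_inj Z j"
      using good_left[OF nm ZD \<sigma>, of j] j by auto
    moreover have "\<sigma> j \<le> n" using \<sigma>n[of j] j mn by auto
    ultimately show ?thesis using j nm by auto
  qed
  have rcv: "rc m \<sigma> P = Z' i - 1"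
  proof -
    have "code n m \<sigma> P = ycode n m Z Z' P" using code_sig[OF mn, of P] \<sigma> mP by simp
    moreover have "Z' i - 1 < P - m" using ZiD i1 nm unfolding P_def by linarith
    ultimately show ?thesis using mP iP by (simp add: code_def ycode_def)
  qed
  define R where "R = \<sigma> ` {m<..P}"
  have Rc: "R = {1..n} - \<sigma> ` ({1..m} \<union> {P<..n})"
  proof -
    have kk: "{m<..P} = {1..n} - ({1..m} \<union> {P<..n})" using mP by auto
    have A: "\<sigma> ` ({1..n} - ({1..m} \<union> {P<..n})) = {1..n} - \<sigma>`({1..m} \<union> {P<..n})"
      by (rule perm_img_compl[OF s]) (use mP in auto)
    show ?thesis unfolding R_def by (simp only: kk A)
  qed
  have eR: "e \<in> R"
  proof -
    have "e \<notin> \<sigma> ` {1..m}" using lv emD by force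
    moreover have "e \<notin> \<sigma> ` {P<..n}" using eS Fs S_def by auto
    ultimately show ?thesis using Rc e1 en by auto
  qed
  have seq: "{v\<in>R. v < e} = {y\<in>S. y < e}"
  proof (intro equalityI subsetI)
    fix v assume "v \<in> {v\<in>R. v < e}"
    then show "v \<in> {y\<in>S. y < e}" using Rc Fs unfolding S_def by auto
  next
    fix y assume y: "y \<in> {y\<in>S. y < e}"
    have "y \<notin> \<sigma> ` {1..m}" using lv y emD by force
    moreover have "y \<notin> \<sigma> ` {P<..n}" using y Fs S_def by auto
    moreover have "y \<in> {1..n}" using y en S_def by auto
    ultimately show "y \<in> {v\<in>R. v < e}" using Rc y by auto
  qed
  have "\<sigma> P = e"
  proof (rule rank_inj_less[of _ R])
    show "\<sigma> P \<in> R" unfolding R_def using mP by auto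
    show "e \<in> R" by (rule eR)
    show "card {z \<in> R. z < \<sigma> P} = card {z \<in> R. z < e}"
      using rc_image[OF s, of m P] rcv seq er unfolding R_def by simp
  qed
  then show ?case using ei e_def P_def by auto
qed



lemma geom_mod:
  fixes p :: real
  assumes p: "0<p" "p<1" and N: "0<N" and r: "r < N"
  shows "emeasure (measure_pmf (geom1 p)) {z. (z-1) mod N = r} = ennreal ((1-p)*p^r/(1-p^N))"
proof -
  let ?g = "geometric_pmf (1-p)"
  have "emeasure (measure_pmf (geom1 p)) {z. (z-1) mod N = r} = emeasure (measure_pmf ?g) {g. g mod N = r}"
    unfolding geom1_def by (simp add: vimage_def)
  also have "\<dots> = (\<integral>\<^sup>+ x. pmf ?g x \<partial>count_space {g. g mod N = r})"
    by (simp add: nn_integral_pmf)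
  also have "\<dots> = (\<integral>\<^sup>+ j. pmf ?g (r + j*N) \<partial>count_space UNIV)"
  proof (rule nn_integral_bij_count_space[symmetric])
    show "bij_betw (\<lambda>j. r + j*N) UNIV {g. g mod N = r}"
    proof (rule bij_betwI')
      show "\<And>x y. (r + x*N = r + y*N) = (x = y)" using N by auto
      show "\<And>x. x \<in> UNIV \<Longrightarrow> r + x*N \<in> {g. g mod N = r}" using r by auto
      show "\<And>y. y \<in> {g. g mod N = r} \<Longrightarrow> \<exists>x\<in>UNIV. y = r + x*N"
        by (metis (mono_tags, lifting) UNIV_I mem_Collect_eq mod_div_mult_eq add.commute)
    qed
  qed
  also have "\<dots> = (\<Sum>j. ennreal (pmf ?g (r + j*N)))" by (rule nn_integral_count_space_nat)
  also have "\<dots> = ennreal ((1-p)*p^r * (1 / (1 - p^N)))"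
  proof (rule suminf_ennreal_eq)
    show "\<And>i. 0 \<le> pmf ?g (r + i*N)" by simp
    have pg: "pmf ?g (r + j*N) = (1-p)*p^r * (p^N)^j" for j
      using p by (simp add: power_add power_mult mult.commute mult.left_commute)
    have "norm (p^N) < 1" using p N by (simp add: abs_of_pos power_less_one_iff)
    then have "(\<lambda>j. (p^N)^j) sums (1 / (1 - p^N))" by (rule geometric_sums)
    then show "(\<lambda>j. pmf ?g (r + j*N)) sums ((1-p)*p^r * (1 / (1 - p^N)))"
      unfolding pg by (rule sums_mult)
  qed
  finally show ?thesis by simp
qed



definition PG :: "real \<Rightarrow> (nat \<Rightarrow> nat) measure" where
  "PG p = Pi\<^sub>M UNIV (\<lambda>_. measure_pmf (geom1 p))"

lemma space_FunM: "space FunM = UNIV"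
  unfolding FunM_def by (simp add: space_PiM)

lemma space_PG: "space (PG p) = UNIV"
  unfolding PG_def by (simp add: space_PiM)

lemma sets_PG: "sets (PG p) = sets FunM"
  unfolding PG_def FunM_def by (intro sets_PiM_cong) auto

lemma prob_PG: "prob_space (PG p)"
  unfolding PG_def by (intro prob_space_PiM prob_space_measure_pmf)

lemma mprefix_meas: "(\<lambda>Z. mprefix Z i) \<in> FunM \<rightarrow>\<^sub>M count_space UNIV"
proof (induction i)
  case 0 then show ?case by simp
next
  case (Suc i)
  have comp: "(\<lambda>Z. Z (Suc i)) \<in> FunM \<rightarrow>\<^sub>M count_space UNIV"
    unfolding FunM_def by (rule measurable_component_singleton) simp
  have "(\<lambda>Z. (\<lambda>P Z. P @ [enumerate ({1..} - set P) (Z (Suc i) - 1)]) (mprefix Z i) Z) \<in> FunM \<rightarrow>\<^sub>M count_space UNIV"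
  proof (rule measurable_compose_countable[where f="\<lambda>P Z. P @ [enumerate ({1..} - set P) (Z (Suc i) - 1)]"])
    fix P :: "nat list"
    show "(\<lambda>Z. P @ [enumerate ({1..} - set P) (Z (Suc i) - 1)]) \<in> FunM \<rightarrow>\<^sub>M count_space UNIV"
      using measurable_compose[OF comp, of "\<lambda>z. P @ [enumerate ({1..} - set P) (z - 1)]" "count_space UNIV"]
      by simp
  qed (rule Suc)
  then show ?case by (simp add: Let_def)
qed

lemma inj_meas_FunM: "mallows_inj \<in> FunM \<rightarrow>\<^sub>M FunM"
proof -
  have "(\<lambda>Z i. mallows_inj Z i) \<in> FunM \<rightarrow>\<^sub>M Pi\<^sub>M UNIV (\<lambda>_. count_space UNIV)"
  proof (rule measurable_PiM_single')
    fix i :: nat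
    show "(\<lambda>Z. mallows_inj Z i) \<in> FunM \<rightarrow>\<^sub>M count_space UNIV"
      unfolding mallows_inj_def
      using measurable_compose[OF mprefix_meas[of i], of "\<lambda>P. if i = 0 then 0 else last P" "count_space UNIV"]
      by simp
  qed simp
  then show ?thesis unfolding FunM_def by simp
qed

lemma inj_meas: "mallows_inj \<in> PG p \<rightarrow>\<^sub>M FunM"
  using inj_meas_FunM by (simp add: measurable_cong_sets[OF sets_PG refl])



definition XS :: "nat \<Rightarrow> nat \<Rightarrow> (nat \<Rightarrow> nat) \<Rightarrow> nat \<Rightarrow> nat set" where
  "XS n m c k = {z. (z-1) mod (n+1-k) = c k}"
definition YS :: "nat \<Rightarrow> nat \<Rightarrow> (nat \<Rightarrow> nat) \<Rightarrow> nat \<Rightarrow> nat set" where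
  "YS n m c i = {z. (z-1) mod (n+1-i-m) = c (n+1-i)}"
definition AA :: "nat \<Rightarrow> nat \<Rightarrow> (nat \<Rightarrow> nat) \<Rightarrow> (nat \<Rightarrow> nat) set" where
  "AA n m c = {Z. \<forall>k\<in>{1..m}. Z k \<in> XS n m c k}"
definition BB :: "nat \<Rightarrow> nat \<Rightarrow> (nat \<Rightarrow> nat) \<Rightarrow> (nat \<Rightarrow> nat) set" where
  "BB n m c = {Z. \<forall>i\<in>{1..n-m}. Z i \<in> YS n m c i}"

lemma ycode_eq_iff:
  assumes mn: "m \<le> n" and c: "c \<in> CS n m"
  shows "(ycode n m Z Z' = c) \<longleftrightarrow> Z \<in> AA n m c \<and> Z' \<in> BB n m c"
proof -
  have ext: "ycode n m Z Z' \<in> extensional {1..n}" "c \<in> extensional {1..n}"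
    using c unfolding ycode_def CS_def by (auto simp: PiE_def)
  have "(ycode n m Z Z' = c) \<longleftrightarrow> (\<forall>k\<in>{1..n}. ycode n m Z Z' k = c k)"
    using ext by (auto intro: extensionalityI)
  also have "\<dots> \<longleftrightarrow> (\<forall>k\<in>{1..m}. ycode n m Z Z' k = c k) \<and> (\<forall>k\<in>{m<..n}. ycode n m Z Z' k = c k)"
  proof -
    have "{1..n} = {1..m} \<union> {m<..n}" using mn by auto
    then show ?thesis by (simp only: ball_Un)
  qed
  also have "(\<forall>k\<in>{1..m}. ycode n m Z Z' k = c k) \<longleftrightarrow> Z \<in> AA n m c"
    using mn unfolding AA_def XS_def ycode_def by auto
  also have "(\<forall>k\<in>{m<..n}. ycode n m Z Z' k = c k) \<longleftrightarrow> Z' \<in> BB n m c"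
  proof
    assume h: "\<forall>k\<in>{m<..n}. ycode n m Z Z' k = c k"
    show "Z' \<in> BB n m c" unfolding BB_def YS_def
    proof (intro CollectI ballI)
      fix i assume i: "i \<in> {1..n-m}"
      then have k: "n+1-i \<in> {m<..n}" by auto
      have "n+1-(n+1-i) = i" "n+1-i-m = (n+1-i) - m" using i by auto
      then show "(Z' i - 1) mod (n+1-i-m) = c (n+1-i)" using h[rule_format, OF k] k
        unfolding ycode_def by auto
    qed
  next
    assume h: "Z' \<in> BB n m c"
    show "\<forall>k\<in>{m<..n}. ycode n m Z Z' k = c k"
    proof
      fix k assume k: "k \<in> {m<..n}"
      then have i: "n+1-k \<in> {1..n-m}" by auto
      have e: "n+1-(n+1-k) = k" "n+1-(n+1-k)-m = k - m" using k by auto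
      have y: "(Z' (n+1-k) - 1) mod (n+1-(n+1-k)-m) = c (n+1-(n+1-k))"
        using h i unfolding BB_def YS_def by blast
      then have "(Z' (n+1-k) - 1) mod (k-m) = c k" unfolding e .
      then show "ycode n m Z Z' k = c k" using k unfolding ycode_def by simp
    qed
  qed
  finally show ?thesis .
qed

lemma sig_eq_iff:
  assumes mn: "m \<le> n" and s: "s permutes {1..n}"
  shows "sig n m Z Z' = s \<longleftrightarrow> ycode n m Z Z' = codeR n m s"
proof
  assume "sig n m Z Z' = s"
  then show "ycode n m Z Z' = codeR n m s"
    using dec_props(2)[OF mn ycode_CS[OF mn, of Z Z']] unfolding sig_def by metis
next
  assume h: "ycode n m Z Z' = codeR n m s"
  have b: "inj_on (codeR n m) {\<sigma>. \<sigma> permutes {1..n}}" using codeR_bij[OF mn] by (simp add: bij_betw_def)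
  have "sig n m Z Z' permutes {1..n}" by (rule sig_perm[OF mn])
  moreover have "codeR n m (sig n m Z Z') = codeR n m s"
    using dec_props(2)[OF mn ycode_CS[OF mn, of Z Z']] h unfolding sig_def by simp
  ultimately show "sig n m Z Z' = s" using b s by (auto dest: inj_onD)
qed

lemma AA_sets: "AA n m c \<in> sets (PG p)"
proof -
  have "AA n m c = {Z \<in> space (PG p). \<forall>k\<in>{1..m}. Z k \<in> XS n m c k}"
    unfolding AA_def space_PG by simp
  also have "\<dots> \<in> sets (PG p)" unfolding PG_def by measurable
  finally show ?thesis .
qed

lemma BB_sets: "BB n m c \<in> sets (PG p)"
proof -
  have "BB n m c = {Z \<in> space (PG p). \<forall>i\<in>{1..n-m}. Z i \<in> YS n m c i}"
    unfolding BB_def space_PG by simp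
  also have "\<dots> \<in> sets (PG p)" unfolding PG_def by measurable
  finally show ?thesis .
qed

lemma emeasure_cyl:
  fixes X :: "nat \<Rightarrow> nat set" and J :: "nat set"
  assumes "finite J"
  shows "emeasure (PG p) {Z. \<forall>k\<in>J. Z k \<in> X k} = (\<Prod>k\<in>J. emeasure (measure_pmf (geom1 p)) (X k))"
proof -
  have "{Z. \<forall>k\<in>J. Z k \<in> X k} = prod_emb UNIV (\<lambda>_. measure_pmf (geom1 p)) J (Pi\<^sub>E J X)"
    unfolding prod_emb_def by (auto simp: PiE_iff)
  then show ?thesis unfolding PG_def
    by (simp add: emeasure_PiM_emb prob_space_measure_pmf assms)
qed



definition beta :: "real \<Rightarrow> nat \<Rightarrow> real" where
  "beta p N = (1-p)/(1-p^N)"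
definition Kc :: "nat \<Rightarrow> nat \<Rightarrow> real \<Rightarrow> real" where
  "Kc n m p = (\<Prod>k\<in>{1..m}. beta p (n+1-k)) * (\<Prod>i\<in>{1..n-m}. beta p (n+1-i-m))"

lemma beta_pos: "0 < p \<Longrightarrow> p < 1 \<Longrightarrow> 0 < N \<Longrightarrow> 0 < beta p N"
  unfolding beta_def by (simp add: power_less_one_iff)

lemma beta_nonneg: "0 < p \<Longrightarrow> p < 1 \<Longrightarrow> 0 \<le> beta p N"
  unfolding beta_def by (intro divide_nonneg_nonneg) (auto simp: power_le_one)

lemma Kc_pos: "0 < p \<Longrightarrow> p < 1 \<Longrightarrow> m \<le> n \<Longrightarrow> 0 < Kc n m p"
  unfolding Kc_def by (intro mult_pos_pos prod_pos) (auto intro!: beta_pos)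

lemma sf_PG: "sigma_finite_measure (PG p)"
  using prob_PG prob_space_imp_sigma_finite by blast

lemma emeasure_sig_single:
  assumes p: "0 < p" "p < 1" and mn: "m \<le> n" and s: "s permutes {1..n}"
  shows "emeasure (PG p \<Otimes>\<^sub>M PG p) {x \<in> space (PG p \<Otimes>\<^sub>M PG p). sig n m (fst x) (snd x) = s}
         = ennreal (Kc n m p * p ^ (\<Sum>k\<in>{1..n}. code n m s k))"
proof -
  define c where "c = codeR n m s"
  have c: "c \<in> CS n m" unfolding c_def by (rule codeR_in_CS[OF s])
  have cb: "c k < Nk n m k" if "k \<in> {1..n}" for k using c that unfolding CS_def by auto
  have cc: "c k = code n m s k" if "k \<in> {1..n}" for k using that unfolding c_def codeR_def by simp
  have set: "{x \<in> space (PG p \<Otimes>\<^sub>M PG p). sig n m (fst x) (snd x) = s} = AA n m c \<times> BB n m c"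
    using sig_eq_iff[OF mn s] ycode_eq_iff[OF mn c] unfolding c_def
    by (auto simp: space_pair_measure space_PG)
  have "emeasure (PG p \<Otimes>\<^sub>M PG p) (AA n m c \<times> BB n m c) = emeasure (PG p) (AA n m c) * emeasure (PG p) (BB n m c)"
    by (rule sigma_finite_measure.emeasure_pair_measure_Times[OF sf_PG AA_sets BB_sets])
  also have "emeasure (PG p) (AA n m c) = (\<Prod>k\<in>{1..m}. emeasure (measure_pmf (geom1 p)) (XS n m c k))"
    unfolding AA_def by (rule emeasure_cyl) simp
  also have "\<dots> = (\<Prod>k\<in>{1..m}. ennreal (beta p (n+1-k) * p ^ c k))"
  proof (rule prod.cong[OF refl])
    fix k assume k: "k \<in> {1..m}"
    have "c k < n+1-k" using cb[of k] k mn by (auto simp: Nk_def)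
    then show "emeasure (measure_pmf (geom1 p)) (XS n m c k) = ennreal (beta p (n+1-k) * p ^ c k)"
      unfolding XS_def beta_def using geom_mod[OF p, of "n+1-k" "c k"] k mn by (auto simp: field_simps)
  qed
  also have "\<dots> = ennreal (\<Prod>k\<in>{1..m}. beta p (n+1-k) * p ^ c k)"
    by (rule prod_ennreal) (use p in \<open>auto intro!: mult_nonneg_nonneg beta_nonneg\<close>)
  also have "emeasure (PG p) (BB n m c) = (\<Prod>i\<in>{1..n-m}. emeasure (measure_pmf (geom1 p)) (YS n m c i))"
    unfolding BB_def by (rule emeasure_cyl) simp
  also have "\<dots> = (\<Prod>i\<in>{1..n-m}. ennreal (beta p (n+1-i-m) * p ^ c (n+1-i)))"
  proof (rule prod.cong[OF refl])
    fix i assume i: "i \<in> {1..n-m}"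
    have i1: "n+1-i \<in> {1..n}" "\<not> (n+1-i \<le> m)" using i mn by auto
    have "c (n+1-i) < n+1-i-m" using cb[OF i1(1)] i1(2) by (simp add: Nk_def)
    moreover have "0 < n+1-i-m" using i by auto
    ultimately show "emeasure (measure_pmf (geom1 p)) (YS n m c i) = ennreal (beta p (n+1-i-m) * p ^ c (n+1-i))"
      unfolding YS_def beta_def using geom_mod[OF p, of "n+1-i-m" "c (n+1-i)"] by (auto simp: field_simps)
  qed
  also have "\<dots> = ennreal (\<Prod>i\<in>{1..n-m}. beta p (n+1-i-m) * p ^ c (n+1-i))"
    by (rule prod_ennreal) (use p in \<open>auto intro!: mult_nonneg_nonneg beta_nonneg\<close>)
  also have "ennreal (\<Prod>k\<in>{1..m}. beta p (n+1-k) * p ^ c k) * ennreal (\<Prod>i\<in>{1..n-m}. beta p (n+1-i-m) * p ^ c (n+1-i))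
     = ennreal ((\<Prod>k\<in>{1..m}. beta p (n+1-k) * p ^ c k) * (\<Prod>i\<in>{1..n-m}. beta p (n+1-i-m) * p ^ c (n+1-i)))"
    by (rule ennreal_mult''[symmetric]) (use p in \<open>auto intro!: prod_nonneg mult_nonneg_nonneg beta_nonneg\<close>)
  also have "(\<Prod>k\<in>{1..m}. beta p (n+1-k) * p ^ c k) * (\<Prod>i\<in>{1..n-m}. beta p (n+1-i-m) * p ^ c (n+1-i))
      = Kc n m p * (p ^ (\<Sum>k\<in>{1..m}. c k) * p ^ (\<Sum>i\<in>{1..n-m}. c (n+1-i)))"
    unfolding Kc_def prod.distrib power_sum by (simp add: ac_simps)
  also have "(\<Sum>i\<in>{1..n-m}. c (n+1-i)) = (\<Sum>k\<in>{m<..n}. c k)"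
    by (rule sum.reindex_bij_witness[where i="\<lambda>k. n+1-k" and j="\<lambda>i. n+1-i"]) (use mn in auto)
  also have "p ^ (\<Sum>k\<in>{1..m}. c k) * p ^ (\<Sum>k\<in>{m<..n}. c k) = p ^ (\<Sum>k\<in>{1..n}. c k)"
  proof -
    have "{1..n} = {1..m} \<union> {m<..n}" using mn by auto
    then have "(\<Sum>k\<in>{1..n}. c k) = (\<Sum>k\<in>{1..m}. c k) + (\<Sum>k\<in>{m<..n}. c k)"
      by (simp only:) (rule sum.union_disjoint, auto)
    then show ?thesis by (simp add: power_add)
  qed
  also have "(\<Sum>k\<in>{1..n}. c k) = (\<Sum>k\<in>{1..n}. code n m s k)" using cc by simp
  finally show ?thesis unfolding set .
qed



lemma sig_preimage:
  assumes mn: "m \<le> n" and s: "s permutes {1..n}"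
  shows "{x \<in> space (PG p \<Otimes>\<^sub>M PG p). sig n m (fst x) (snd x) = s} = AA n m (codeR n m s) \<times> BB n m (codeR n m s)"
  using sig_eq_iff[OF mn s] ycode_eq_iff[OF mn codeR_in_CS[OF s]]
  by (auto simp: space_pair_measure space_PG)

lemma sig_preimage_sets:
  assumes mn: "m \<le> n" and s: "s permutes {1..n}"
  shows "{x \<in> space (PG p \<Otimes>\<^sub>M PG p). sig n m (fst x) (snd x) = s} \<in> sets (PG p \<Otimes>\<^sub>M PG p)"
  unfolding sig_preimage[OF mn s] by (intro pair_measureI AA_sets BB_sets)

lemma sig_meas:
  assumes mn: "m \<le> n"
  shows "(\<lambda>x. sig n m (fst x) (snd x)) \<in> (PG p \<Otimes>\<^sub>M PG p) \<rightarrow>\<^sub>M FunM"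
proof -
  have y: "(\<lambda>x. ycode n m (fst x) (snd x)) \<in> (PG p \<Otimes>\<^sub>M PG p) \<rightarrow>\<^sub>M count_space (CS n m)"
  proof (subst measurable_count_space_eq2)
    show "finite (CS n m)" unfolding CS_def by (intro finite_PiE) auto
    show "(\<lambda>x. ycode n m (fst x) (snd x)) \<in> space (PG p \<Otimes>\<^sub>M PG p) \<rightarrow> CS n m \<and>
      (\<forall>a\<in>CS n m. (\<lambda>x. ycode n m (fst x) (snd x)) -` {a} \<inter> space (PG p \<Otimes>\<^sub>M PG p) \<in> sets (PG p \<Otimes>\<^sub>M PG p))"
    proof (intro conjI ballI)
      show "(\<lambda>x. ycode n m (fst x) (snd x)) \<in> space (PG p \<Otimes>\<^sub>M PG p) \<rightarrow> CS n m"
        using ycode_CS[OF mn] by auto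
      fix c assume c: "c \<in> CS n m"
      have "(\<lambda>x. ycode n m (fst x) (snd x)) -` {c} \<inter> space (PG p \<Otimes>\<^sub>M PG p) = AA n m c \<times> BB n m c"
      proof (rule set_eqI)
        fix x :: "(nat\<Rightarrow>nat)\<times>(nat\<Rightarrow>nat)"
        obtain a b where x: "x = (a,b)" by (cases x)
        show "x \<in> (\<lambda>x. ycode n m (fst x) (snd x)) -` {c} \<inter> space (PG p \<Otimes>\<^sub>M PG p) \<longleftrightarrow> x \<in> AA n m c \<times> BB n m c"
          using ycode_eq_iff[OF mn c, of a b] unfolding x by (simp add: space_pair_measure space_PG)
      qed
      then show "(\<lambda>x. ycode n m (fst x) (snd x)) -` {c} \<inter> space (PG p \<Otimes>\<^sub>M PG p) \<in> sets (PG p \<Otimes>\<^sub>M PG p)"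
        by (simp add: pair_measureI AA_sets BB_sets)
    qed
  qed
  have d: "dec n m \<in> count_space (CS n m) \<rightarrow>\<^sub>M FunM" by (simp add: space_FunM)
  show ?thesis using measurable_comp[OF y d] unfolding sig_def o_def by simp
qed

definition Wn :: "nat \<Rightarrow> real \<Rightarrow> real" where
  "Wn n q = (\<Sum>\<tau>\<in>{\<tau>. \<tau> permutes {1..n}}. q ^ inversions n \<tau>)"

lemma Wn_pos: "0 < q \<Longrightarrow> 0 < Wn n q"
proof -
  assume q: "0 < q"
  have "id \<in> {\<tau>. \<tau> permutes {1..n}}" by (simp add: permutes_id)
  moreover have "finite {\<tau>. \<tau> permutes {1..n}}" by (rule finite_permutations) simp
  ultimately show ?thesis unfolding Wn_def using q
    by (intro sum_pos2[where i=id]) auto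
qed

lemma pmf_mallows_fin:
  assumes q: "0 < q"
  shows "pmf (mallows_fin n q) s = (if s permutes {1..n} then q ^ inversions n s / Wn n q else 0)"
proof -
  let ?f = "\<lambda>\<sigma>. if \<sigma> permutes {1..n} then q ^ inversions n \<sigma> / Wn n q else 0"
  have fin: "finite {\<tau>. \<tau> permutes {1..n}}" by (rule finite_permutations) simp
  have W: "0 < Wn n q" by (rule Wn_pos[OF q])
  have nn: "\<And>x. 0 \<le> ?f x" using q W by auto
  have "(\<integral>\<^sup>+x. ennreal (?f x) \<partial>count_space UNIV) = (\<Sum>x\<in>{\<tau>. \<tau> permutes {1..n}}. ennreal (?f x))"
    by (rule nn_integral_count_space'[OF fin]) auto
  also have "\<dots> = ennreal (\<Sum>x\<in>{\<tau>. \<tau> permutes {1..n}}. ?f x)"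
    by (rule sum_ennreal) (rule nn)
  also have "(\<Sum>x\<in>{\<tau>. \<tau> permutes {1..n}}. ?f x) = (\<Sum>x\<in>{\<tau>. \<tau> permutes {1..n}}. q ^ inversions n x / Wn n q)"
    by (intro sum.cong) auto
  also have "\<dots> = 1" using W unfolding Wn_def[symmetric] sum_divide_distrib[symmetric] by (simp add: Wn_def)
  finally have int1: "(\<integral>\<^sup>+x. ennreal (?f x) \<partial>count_space UNIV) = 1" by simp
  have "mallows_fin n q = embed_pmf ?f" unfolding mallows_fin_def Wn_def by simp
  then show ?thesis using pmf_embed_pmf[of ?f, OF nn int1] by simp
qed



lemma law_sig:
  assumes q: "1 < q" and mn: "m \<le> n"
  shows "distr (PG (1/q) \<Otimes>\<^sub>M PG (1/q)) FunM (\<lambda>x. sig n m (fst x) (snd x))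
         = distr (measure_pmf (mallows_fin n q)) FunM (\<lambda>x. x)"
proof -
  define p where "p = 1/q"
  have p: "0 < p" "p < 1" using q unfolding p_def by auto
  have pq: "p * q = 1" using q unfolding p_def by auto
  define M where "M = PG p \<Otimes>\<^sub>M PG p"
  have prM: "prob_space M" unfolding M_def by (intro prob_space_pair prob_PG)
  define f where "f = (\<lambda>x. sig n m (fst x) (snd x))"
  have fm: "f \<in> M \<rightarrow>\<^sub>M FunM" unfolding f_def M_def by (rule sig_meas[OF mn])
  define Pm where "Pm = {s. s permutes {1..n}}"
  have finPm: "finite Pm" unfolding Pm_def by (rule finite_permutations) simp
  define T where "T = card {(i,j). 1\<le>i \<and> i<j \<and> (j::nat)\<le>n}"
  define E where "E s = {x\<in>space M. f x = s}" for s
  define K where "K = Kc n m p * p ^ T"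
  have K0: "0 \<le> K" unfolding K_def using Kc_pos[OF p mn] p by simp
  have Es: "emeasure M (E s) = ennreal (K * q ^ inversions n s)" if s: "s \<in> Pm" for s
  proof -
    have sp: "s permutes {1..n}" using s Pm_def by simp
    have ic: "(\<Sum>k\<in>{1..n}. code n m s k) + inversions n s = T" using inv_code[OF sp] unfolding T_def by simp
    have "p ^ (\<Sum>k\<in>{1..n}. code n m s k) = p ^ (\<Sum>k\<in>{1..n}. code n m s k) * (p * q) ^ inversions n s"
      using pq by simp
    also have "\<dots> = p ^ T * q ^ inversions n s"
      unfolding ic[symmetric] by (simp add: power_add power_mult_distrib)
    finally have "p ^ (\<Sum>k\<in>{1..n}. code n m s k) = p ^ T * q ^ inversions n s" .
    then show ?thesis
      using emeasure_sig_single[OF p mn sp] unfolding E_def M_def f_def K_def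
      by (simp add: mult.assoc)
  qed
  have Esets: "E s \<in> sets M" if "s \<in> Pm" for s
    using sig_preimage_sets[OF mn, of s p] that unfolding E_def M_def f_def Pm_def by simp
  have disj: "disjoint_family_on E B" for B unfolding disjoint_family_on_def E_def by auto
  have fP: "f x \<in> Pm" for x unfolding f_def Pm_def using sig_perm[OF mn] by simp
  have cover: "f -` A \<inter> space M = (\<Union>s\<in>A \<inter> Pm. E s)" for A
    unfolding E_def using fP by auto
  have "(\<Sum>s\<in>Pm. emeasure M (E s)) = emeasure M (\<Union>s\<in>Pm. E s)"
    by (rule sum_emeasure) (use Esets disj finPm in auto)
  also have "(\<Union>s\<in>Pm. E s) = space M" using cover[of UNIV] by simp
  also have "emeasure M (space M) = 1" using prM by (simp add: prob_space.emeasure_space_1)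
  finally have "(\<Sum>s\<in>Pm. ennreal (K * q ^ inversions n s)) = 1" using Es by simp
  then have "ennreal (\<Sum>s\<in>Pm. K * q ^ inversions n s) = 1"
    using K0 q by (subst sum_ennreal[symmetric]) auto
  then have "K * Wn n q = 1" unfolding Wn_def Pm_def[symmetric] by (simp add: sum_distrib_left)
  then have KW: "K = 1 / Wn n q" using Wn_pos[of q n] q by (simp add: field_simps)
  let ?Q = "mallows_fin n q"
  have pmfQ: "pmf ?Q s = (if s \<in> Pm then q ^ inversions n s / Wn n q else 0)" for s
    using pmf_mallows_fin[of q n s] q unfolding Pm_def by simp
  have setQ: "set_pmf ?Q \<subseteq> Pm" using pmfQ by (auto simp: set_pmf_iff split: if_splits)
  show ?thesis
  proof (rule measure_eqI)
    show "sets (distr (PG (1/q) \<Otimes>\<^sub>M PG (1/q)) FunM (\<lambda>x. sig n m (fst x) (snd x))) =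
          sets (distr (measure_pmf ?Q) FunM (\<lambda>x. x))" by simp
    fix A assume A: "A \<in> sets (distr (PG (1/q) \<Otimes>\<^sub>M PG (1/q)) FunM (\<lambda>x. sig n m (fst x) (snd x)))"
    then have AF: "A \<in> sets FunM" by simp
    have "emeasure (distr (PG (1/q) \<Otimes>\<^sub>M PG (1/q)) FunM (\<lambda>x. sig n m (fst x) (snd x))) A
        = emeasure M (f -` A \<inter> space M)"
      unfolding M_def f_def p_def by (rule emeasure_distr[OF fm[unfolded M_def f_def p_def] AF])
    also have "\<dots> = (\<Sum>s\<in>A \<inter> Pm. emeasure M (E s))"
      unfolding cover by (rule sum_emeasure[symmetric]) (use Esets disj finPm in auto)
    also have "\<dots> = (\<Sum>s\<in>A \<inter> Pm. ennreal (pmf ?Q s))"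
      using Es KW pmfQ by (intro sum.cong) auto
    also have "\<dots> = emeasure (measure_pmf ?Q) (A \<inter> Pm)"
      using emeasure_measure_pmf_finite[of "A \<inter> Pm" ?Q] finPm by simp
    also have "\<dots> = emeasure (measure_pmf ?Q) A"
    proof -
      have "A \<inter> Pm \<inter> set_pmf ?Q = A \<inter> set_pmf ?Q" using setQ by auto
      then show ?thesis using emeasure_Int_set_pmf[of ?Q "A \<inter> Pm"] emeasure_Int_set_pmf[of ?Q A] by simp
    qed
    also have "\<dots> = emeasure (distr (measure_pmf ?Q) FunM (\<lambda>x. x)) A"
      using emeasure_distr[of "\<lambda>x. x" "measure_pmf ?Q" FunM A] AF by (simp add: space_FunM)
    finally show "emeasure (distr (PG (1/q) \<Otimes>\<^sub>M PG (1/q)) FunM (\<lambda>x. sig n m (fst x) (snd x))) A =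
        emeasure (distr (measure_pmf ?Q) FunM (\<lambda>x. x)) A" .
  qed
qed



lemma floor_bound:
  assumes "int i \<le> \<lfloor>real n / 2 - (ln (real n))^2\<rfloor>"
  shows "2 * real i + 2 * (ln (real n))^2 \<le> real n"
proof -
  have "real_of_int (int i) \<le> real n / 2 - (ln (real n))^2" using assms by (simp only: le_floor_iff)
  then show ?thesis by simp
qed

lemma pred_eq_nat[measurable (raw)]:
  fixes f g :: "'a \<Rightarrow> nat"
  assumes f: "f \<in> M \<rightarrow>\<^sub>M count_space UNIV" and g: "g \<in> M \<rightarrow>\<^sub>M count_space UNIV"
  shows "Measurable.pred M (\<lambda>x. f x = g x)"
proof -
  have "(\<lambda>x. (\<lambda>a x. a = g x) (f x) x) \<in> M \<rightarrow>\<^sub>M count_space UNIV"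
    by (rule measurable_compose_countable[OF _ f]) (rule pred_count_space_const2[OF g])
  then show ?thesis unfolding Measurable.pred_def by simp
qed

lemma good_sets: "good_event n \<in> sets (FunM \<Otimes>\<^sub>M FunM \<Otimes>\<^sub>M FunM)"
proof -
  define I where "I = {i::nat. 1 \<le> i \<and> int i \<le> \<lfloor>real n / 2 - (ln (real n))^2\<rfloor>}"
  have "I \<subseteq> {..n}"
  proof
    fix x assume "x \<in> I"
    then have "2 * real x + 2 * (ln (real n))^2 \<le> real n" using floor_bound unfolding I_def by blast
    moreover have "0 \<le> (ln (real n))^2" by simp
    ultimately have "real x \<le> real n" by linarith
    then show "x \<in> {..n}" by simp
  qed
  then have "finite I" using finite_subset by blast
  have "good_event n = {x \<in> space (FunM \<Otimes>\<^sub>M FunM \<Otimes>\<^sub>M FunM). \<forall>i\<in>I. n + 1 - fst x i = fst (snd x) i \<and> fst x (n + 1 - i) = snd (snd x) i}"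
    unfolding good_event_def I_def by (auto simp: space_pair_measure space_FunM)
  also have "\<dots> \<in> sets (FunM \<Otimes>\<^sub>M FunM \<Otimes>\<^sub>M FunM)"
    unfolding FunM_def using \<open>finite I\<close> by measurable
  finally show ?thesis .
qed




lemma geo_sum: "(\<Sum>g\<in>{..D}. p^g * (1-p)) = 1 - (p::real) ^ Suc D"
  by (induction D) (auto simp: algebra_simps)

lemma geo_cdf:
  assumes p: "0 < p" "p < 1"
  shows "emeasure (measure_pmf (geom1 p)) {z. z - 1 \<le> D} = ennreal (1 - p ^ Suc D)"
proof -
  have "emeasure (measure_pmf (geom1 p)) {z. z - 1 \<le> D} = emeasure (measure_pmf (geometric_pmf (1-p))) {..D}"
    unfolding geom1_def by (simp add: vimage_def atMost_def)
  also have "\<dots> = (\<Sum>g\<in>{..D}. ennreal (pmf (geometric_pmf (1-p)) g))"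
    by (simp add: emeasure_measure_pmf_finite)
  also have "\<dots> = ennreal (\<Sum>g\<in>{..D}. p^g * (1-p))"
    using p by (subst sum_ennreal) auto
  finally show ?thesis by (simp add: geo_sum)
qed

definition EA :: "nat \<Rightarrow> nat \<Rightarrow> (nat \<Rightarrow> nat) set" where
  "EA m D = {Z. \<forall>k\<in>{1..m}. Z k \<in> {z. z - 1 \<le> D}}"

lemma EA_sets: "EA m D \<in> sets (PG p)"
proof -
  have "EA m D = {Z \<in> space (PG p). \<forall>k\<in>{1..m}. Z k \<in> {z. z - 1 \<le> D}}"
    unfolding EA_def space_PG by simp
  also have "\<dots> \<in> sets (PG p)" unfolding PG_def by measurable
  finally show ?thesis .
qed

lemma measure_EA2:
  assumes p: "0 < p" "p < 1"
  shows "measure (PG p \<Otimes>\<^sub>M PG p) (EA m D \<times> EA m D) = (1 - p ^ Suc D) ^ (2*m)"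
proof -
  have "p ^ Suc D \<le> 1" by (rule power_le_one) (use p in auto)
  then have h: "0 \<le> 1 - p ^ Suc D" by linarith
  have e1: "emeasure (PG p) (EA m D) = ennreal ((1 - p ^ Suc D) ^ m)"
  proof -
    have "emeasure (PG p) (EA m D) = (\<Prod>k\<in>{1..m}. emeasure (measure_pmf (geom1 p)) {z. z - 1 \<le> D})"
      unfolding EA_def by (rule emeasure_cyl) simp
    also have "\<dots> = (\<Prod>k\<in>{1..m}. ennreal (1 - p ^ Suc D))" using geo_cdf[OF p] by simp
    also have "\<dots> = ennreal (\<Prod>k\<in>{1..m}. (1 - p ^ Suc D))" by (rule prod_ennreal) (use h in auto)
    finally show ?thesis by simp
  qed
  have "emeasure (PG p \<Otimes>\<^sub>M PG p) (EA m D \<times> EA m D) = emeasure (PG p) (EA m D) * emeasure (PG p) (EA m D)"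
    by (rule sigma_finite_measure.emeasure_pair_measure_Times[OF sf_PG EA_sets EA_sets])
  also have "\<dots> = ennreal ((1 - p ^ Suc D) ^ (2*m))"
    unfolding e1 using h by (simp add: ennreal_mult''[symmetric] power_mult mult_2 power_add)
  finally show ?thesis by (simp add: measure_def h)
qed

definition mN :: "nat \<Rightarrow> nat" where
  "mN n = nat \<lfloor>real n / 2 - (ln (real n))^2\<rfloor>"
definition DN :: "nat \<Rightarrow> nat" where
  "DN n = nat \<lfloor>(ln (real n))^2\<rfloor>"

lemma mN_le: "mN n \<le> n"
proof (cases "\<lfloor>real n / 2 - (ln (real n))^2\<rfloor> \<le> 0")
  case True then show ?thesis unfolding mN_def by simp
next
  case False
  then have "int (mN n) = \<lfloor>real n / 2 - (ln (real n))^2\<rfloor>" unfolding mN_def by simp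
  then have "2 * real (mN n) + 2 * (ln (real n))^2 \<le> real n" using floor_bound by simp
  moreover have "0 \<le> (ln (real n))^2" by simp
  ultimately have "real (mN n) \<le> real n" by linarith
  then show ?thesis by simp
qed

lemma mN_iff: "1 \<le> i \<Longrightarrow> (int i \<le> \<lfloor>real n / 2 - (ln (real n))^2\<rfloor> \<longleftrightarrow> i \<le> mN n)"
proof (cases "\<lfloor>real n / 2 - (ln (real n))^2\<rfloor> \<le> 0")
  case True
  assume i1: "1 \<le> i"
  have "\<not> int i \<le> \<lfloor>real n / 2 - (ln (real n))^2\<rfloor>" using True i1 by linarith
  moreover have "\<not> i \<le> mN n" using True i1 unfolding mN_def by simp
  ultimately show ?thesis by blast
next
  case False
  then show ?thesis unfolding mN_def by (simp add: le_nat_iff)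
qed

lemma mN_DN: "1 \<le> mN n \<Longrightarrow> 2 * mN n + 2 * DN n \<le> n"
proof -
  assume m1: "1 \<le> mN n"
  have gen: "1 \<le> nat z \<Longrightarrow> int (nat z) = z" for z :: int by (cases "z \<le> 0") auto
  have "int (mN n) = \<lfloor>real n / 2 - (ln (real n))^2\<rfloor>" using gen m1 unfolding mN_def by blast
  then have a: "2 * real (mN n) + 2 * (ln (real n))^2 \<le> real n" using floor_bound by simp
  have f0: "0 \<le> \<lfloor>(ln (real n))^2\<rfloor>" by simp
  have "real (DN n) = real_of_int \<lfloor>(ln (real n))^2\<rfloor>" unfolding DN_def using f0 by simp
  also have "\<dots> \<le> (ln (real n))^2" by (rule of_int_floor_le)
  finally have "real (DN n) \<le> (ln (real n))^2" .
  then have "real (2 * mN n + 2 * DN n) \<le> real n" using a by simp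
  then show ?thesis by linarith
qed

definition Phi :: "nat \<Rightarrow> (nat \<Rightarrow> nat) \<times> (nat \<Rightarrow> nat) \<Rightarrow> (nat \<Rightarrow> nat) \<times> (nat \<Rightarrow> nat) \<times> (nat \<Rightarrow> nat)" where
  "Phi n x = (sig n (mN n) (fst x) (snd x), mallows_inj (fst x), mallows_inj (snd x))"

lemma Phi_good:
  assumes x: "x \<in> EA (mN n) (DN n) \<times> EA (mN n) (DN n)"
  shows "Phi n x \<in> good_event n"
proof -
  obtain Z Z' where xz: "x = (Z, Z')" by (cases x)
  have ZD: "\<And>k. k \<in> {1..mN n} \<Longrightarrow> Z k - 1 \<le> DN n" and ZD': "\<And>k. k \<in> {1..mN n} \<Longrightarrow> Z' k - 1 \<le> DN n"
    using x unfolding xz EA_def by auto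
  { fix i :: nat assume i: "1 \<le> i" "int i \<le> \<lfloor>real n / 2 - (ln (real n))^2\<rfloor>"
    then have im: "i \<le> mN n" using mN_iff by blast
    then have nm: "2 * mN n + 2 * DN n \<le> n" using i mN_DN by simp
    have "mallows_inj Z i = n+1 - sig n (mN n) Z Z' i"
      using good_left[OF nm ZD refl, where k=i] i im by auto
    moreover have "mallows_inj Z' i = sig n (mN n) Z Z' (n+1-i)"
      using good_right[OF nm ZD ZD' refl, where i=i] i im by auto
    ultimately have "n + 1 - sig n (mN n) Z Z' i = mallows_inj Z i \<and> sig n (mN n) Z Z' (n + 1 - i) = mallows_inj Z' i"
      by simp }
  then show ?thesis unfolding good_event_def Phi_def xz by auto
qed



lemma tail_lim:
  fixes p :: real
  assumes p: "0 < p" "p < 1"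
  shows "(\<lambda>n. 2 * real (mN n) * p ^ Suc (DN n)) \<longlonglongrightarrow> 0"
proof (rule tendsto_sandwich[of "\<lambda>_. 0" _ _ "\<lambda>n. 2 * inverse (real n)"])
  show "\<forall>\<^sub>F n in sequentially. 0 \<le> 2 * real (mN n) * p ^ Suc (DN n)" using p by simp
  show "(\<lambda>_. 0::real) \<longlonglongrightarrow> 0" by simp
  show "(\<lambda>n. 2 * inverse (real n)) \<longlonglongrightarrow> 0"
    using tendsto_mult_right_zero[OF lim_inverse_n, of 2] by simp
  define c where "c = - ln p"
  have c: "0 < c" using p unfolding c_def by simp
  define N where "N = nat \<lceil>exp (2/c)\<rceil> + 1"
  show "\<forall>\<^sub>F n in sequentially. 2 * real (mN n) * p ^ Suc (DN n) \<le> 2 * inverse (real n)"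
    unfolding eventually_sequentially
  proof (intro exI[of _ N] allI impI)
    fix n assume nN: "N \<le> n"
    have n1: "1 \<le> real n" using nN unfolding N_def by simp
    have nexp: "exp (2/c) \<le> real n"
    proof -
      have "exp (2/c) \<le> real (nat \<lceil>exp (2/c)\<rceil>)" by linarith
      also have "\<dots> \<le> real n" using nN unfolding N_def by simp
      finally show ?thesis .
    qed
    have "ln (exp (2/c)) \<le> ln (real n)" using nexp n1 by (subst ln_le_cancel_iff) auto
    then have lnn: "2/c \<le> ln (real n)" by simp
    define L where "L = (ln (real n))^2"
    have DL: "L \<le> real (Suc (DN n))"
    proof -
      have "L < real_of_int \<lfloor>L\<rfloor> + 1" by linarith
      moreover have "real (DN n) = real_of_int \<lfloor>L\<rfloor>" unfolding DN_def L_def by simp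
      ultimately show ?thesis by (simp only: of_nat_Suc)
    qed
    have pe: "p ^ Suc (DN n) = exp (real (Suc (DN n)) * ln p)"
      by (subst exp_of_nat_mult) (simp add: p)
    have "real (Suc (DN n)) * ln p \<le> L * ln p"
      using DL p by (intro mult_right_mono_neg) auto
    also have "L * ln p = - (c * ln (real n)) * ln (real n)" unfolding L_def c_def by (simp add: power2_eq_square)
    also have "\<dots> \<le> - 2 * ln (real n)"
    proof -
      have "2 \<le> c * ln (real n)" using lnn c by (simp add: field_simps)
      moreover have "0 \<le> ln (real n)" using n1 by simp
      ultimately show ?thesis by (simp add: mult_right_mono)
    qed
    finally have "p ^ Suc (DN n) \<le> exp (- 2 * ln (real n))" unfolding pe by simp
    also have "exp (- 2 * ln (real n)) = inverse (real n * real n)"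
    proof -
      have "- 2 * ln (real n) = - (ln (real n) + ln (real n))" by simp
      then have "exp (- 2 * ln (real n)) = inverse (exp (ln (real n)) * exp (ln (real n)))"
        by (simp only: exp_minus exp_add)
      also have "\<dots> = inverse (real n * real n)" using n1 by simp
      finally show ?thesis .
    qed
    finally have pb: "p ^ Suc (DN n) \<le> inverse (real n * real n)" .
    have "2 * real (mN n) * p ^ Suc (DN n) \<le> 2 * real n * inverse (real n * real n)"
      using pb mN_le[of n] p by (intro mult_mono) auto
    also have "\<dots> = 2 * inverse (real n)" using n1 by (simp add: field_simps)
    finally show "2 * real (mN n) * p ^ Suc (DN n) \<le> 2 * inverse (real n)" .
  qed
qed


theorem corollary4p2:
  fixes q :: real
  assumes "q > 1"
  shows "\<exists>C. (\<forall>n. is_coupling n q (C n)) \<and>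
             (\<lambda>n. measure (C n) (good_event n)) \<longlonglongrightarrow> 1"
proof -
  define p where "p = 1/q"
  have p: "0 < p" "p < 1" using assms unfolding p_def by auto
  define M where "M = PG p \<Otimes>\<^sub>M PG p"
  have prM: "prob_space M" unfolding M_def by (intro prob_space_pair prob_PG)
  interpret M: prob_space M by (rule prM)
  have Phim: "Phi n \<in> M \<rightarrow>\<^sub>M (FunM \<Otimes>\<^sub>M FunM \<Otimes>\<^sub>M FunM)" for n
  proof -
    have e: "Phi n = (\<lambda>x. (sig n (mN n) (fst x) (snd x), mallows_inj (fst x), mallows_inj (snd x)))"
      by (rule ext) (simp add: Phi_def)
    show ?thesis unfolding e M_def
      by (intro measurable_Pair sig_meas[OF mN_le] measurable_compose[OF measurable_fst inj_meas]
          measurable_compose[OF measurable_snd inj_meas])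
  qed
  define C where "C n = distr M (FunM \<Otimes>\<^sub>M FunM \<Otimes>\<^sub>M FunM) (Phi n)" for n
  have coup: "is_coupling n q (C n)" for n
  proof -
    have pr: "prob_space (C n)" unfolding C_def by (rule M.prob_space_distr[OF Phim])
    have st: "sets (C n) = sets (FunM \<Otimes>\<^sub>M FunM \<Otimes>\<^sub>M FunM)" unfolding C_def by simp
    have f1: "distr (C n) FunM fst = distr M FunM (fst \<circ> Phi n)"
      unfolding C_def by (rule distr_distr[OF measurable_fst Phim])
    have f2: "fst \<circ> Phi n = (\<lambda>x. sig n (mN n) (fst x) (snd x))" by (rule ext) (simp add: Phi_def)
    have fst_law: "distr (C n) FunM fst = distr (measure_pmf (mallows_fin n q)) FunM (\<lambda>x. x)"
      unfolding f1 f2 M_def p_def by (rule law_sig[OF assms mN_le])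
    have s1: "distr (C n) (FunM \<Otimes>\<^sub>M FunM) snd = distr M (FunM \<Otimes>\<^sub>M FunM) (snd \<circ> Phi n)"
      unfolding C_def by (rule distr_distr[OF measurable_snd Phim])
    have s2: "snd \<circ> Phi n = (\<lambda>(x, y). (mallows_inj x, mallows_inj y))" by (rule ext) (simp add: Phi_def split_beta)
    have sfd: "sigma_finite_measure (distr (PG p) FunM mallows_inj)"
      using prob_space.prob_space_distr[OF prob_PG inj_meas] prob_space_imp_sigma_finite by blast
    have s3: "distr (PG p) FunM mallows_inj \<Otimes>\<^sub>M distr (PG p) FunM mallows_inj
        = distr M (FunM \<Otimes>\<^sub>M FunM) (\<lambda>(x, y). (mallows_inj x, mallows_inj y))"
      unfolding M_def by (rule pair_measure_distr[OF inj_meas inj_meas sfd])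
    have mN: "mallows_N (1/q) = distr (PG p) FunM mallows_inj" unfolding mallows_N_def PG_def p_def ..
    have snd_law: "distr (C n) (FunM \<Otimes>\<^sub>M FunM) snd = mallows_N (1/q) \<Otimes>\<^sub>M mallows_N (1/q)"
      unfolding s1 s2 mN s3 ..
    show ?thesis unfolding is_coupling_def using pr st fst_law snd_law by blast
  qed
  have lower: "1 - 2 * real (mN n) * p ^ Suc (DN n) \<le> measure (C n) (good_event n)" for n
  proof -
    have "measure (C n) (good_event n) = measure M (Phi n -` good_event n \<inter> space M)"
      unfolding C_def by (rule measure_distr[OF Phim good_sets])
    moreover have "measure M (EA (mN n) (DN n) \<times> EA (mN n) (DN n)) \<le> measure M (Phi n -` good_event n \<inter> space M)"
    proof (rule M.finite_measure_mono)
      show "EA (mN n) (DN n) \<times> EA (mN n) (DN n) \<subseteq> Phi n -` good_event n \<inter> space M"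
        using Phi_good by (auto simp: M_def space_pair_measure space_PG)
      show "Phi n -` good_event n \<inter> space M \<in> sets M" by (rule measurable_sets[OF Phim good_sets])
    qed
    moreover have "measure M (EA (mN n) (DN n) \<times> EA (mN n) (DN n)) = (1 - p ^ Suc (DN n)) ^ (2 * mN n)"
      unfolding M_def by (rule measure_EA2[OF p])
    moreover have "1 - 2 * real (mN n) * p ^ Suc (DN n) \<le> (1 - p ^ Suc (DN n)) ^ (2 * mN n)"
    proof -
      have "p ^ Suc (DN n) \<le> 1" by (rule power_le_one) (use p in auto)
      then have "-1 \<le> -(p ^ Suc (DN n))" by simp
      from Bernoulli_inequality[OF this, of "2 * mN n"]
      show ?thesis by simp
    qed
    ultimately show ?thesis by linarith
  qed
  have upper: "measure (C n) (good_event n) \<le> 1" for n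
  proof -
    interpret Cn: prob_space "C n" unfolding C_def by (rule M.prob_space_distr[OF Phim])
    show ?thesis by (rule Cn.prob_le_1)
  qed
  have "(\<lambda>n. measure (C n) (good_event n)) \<longlonglongrightarrow> 1"
  proof (rule tendsto_sandwich[of "\<lambda>n. 1 - 2 * real (mN n) * p ^ Suc (DN n)" _ _ "\<lambda>_. 1"])
    show "\<forall>\<^sub>F n in sequentially. 1 - 2 * real (mN n) * p ^ Suc (DN n) \<le> measure (C n) (good_event n)"
      using lower by simp
    show "\<forall>\<^sub>F n in sequentially. measure (C n) (good_event n) \<le> 1" using upper by simp
    show "(\<lambda>_. 1::real) \<longlonglongrightarrow> 1" by simp
    show "(\<lambda>n. 1 - 2 * real (mN n) * p ^ Suc (DN n)) \<longlonglongrightarrow> 1"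
      using tendsto_diff[OF tendsto_const[of 1] tail_lim[OF p]] by simp
  qed
  then show ?thesis using coup by blast
qed


end
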